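(* Let $G$ be a nontrivial finite abelian group and $\mathcal P_\bullet$ a $3^G$ subfactor planar algebra in which $\rho\otimes g\cong g^{-1}\rho$ for all $g\in G$. Then every bimodule (vertex) at depth $4$ of the principal graph $\Gamma_+$ is self-dual, i.e. $\overline{g\rho}\cong g\rho$ for all $g\in G$.
   Context: A $3^G$ subfactor planar algebra is a subfactor planar algebra whose principal graph $\Gamma_+$ consists of a path $1-X-\rho-Z$ (depths $0$–$3$) and, for each $g\in G\setminus\{1\}$, a path $Z-g\rho-gX-g$ (depths $3$–$6$), and whose even bimodules form a fusion category with simple objects $G\cup\{g\rho\}$ and fusion rules $g\otimes h=gh$, $g\otimes\rho=g\rho$, $\rho\otimes g=\theta(g)\rho$ for an automorphism $\theta$ of $G$, and $\rho\otimes\rho\cong1\oplus\bigoplus_{g\in G}g\rho$. Here $\theta(g)=g^{-1}$. *)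

theory Defs
  imports "HOL-Algebra.Group"
begin

text \<open>Simple objects of the even part of a 3^G subfactor planar algebra:
  the group elements g (Grp g) and the objects g rho (Rho g); rho itself is Rho 1.\<close>
datatype 'g obj3 = Grp 'g | Rho 'g

definition simples3 :: "('g, 'b) monoid_scheme \<Rightarrow> 'g obj3 set" where
  "simples3 G = Grp ` carrier G \<union> Rho ` carrier G"

text \<open>Fusion-rule data of a (rigid, semisimple) fusion category on the set S of
  simple objects: N a b c = dim Hom(c, a \<otimes> b), unit object u, duality dual.\<close>
definition fusion_rules_with_duality ::
  "'o set \<Rightarrow> 'o \<Rightarrow> ('o \<Rightarrow> 'o \<Rightarrow> 'o \<Rightarrow> nat) \<Rightarrow> ('o \<Rightarrow> 'o) \<Rightarrow> bool" where
  "fusion_rules_with_duality S u N dual \<longleftrightarrow>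
     finite S \<and> u \<in> S \<and>
     (\<forall>a\<in>S. dual a \<in> S \<and> dual (dual a) = a) \<and>
     (\<forall>a\<in>S. \<forall>b\<in>S. N u a b = of_bool (a = b) \<and> N a u b = of_bool (a = b)) \<and>
     (\<forall>a\<in>S. \<forall>b\<in>S. \<forall>c\<in>S. \<forall>d\<in>S.
        (\<Sum>e\<in>S. N a b e * N e c d) = (\<Sum>e\<in>S. N b c e * N a e d)) \<and>
     (\<forall>a\<in>S. \<forall>b\<in>S. N a b u = of_bool (b = dual a)) \<and>
     (\<forall>a\<in>S. \<forall>b\<in>S. \<forall>c\<in>S.
        N a b c = N (dual b) (dual a) (dual c) \<and>
        N a b c = N (dual a) c b \<and>
        N a b c = N c (dual b) a)"

definition three_G_fusion_rules_inv ::
  "('g, 'b) monoid_scheme \<Rightarrow> ('g obj3 \<Rightarrow> 'g obj3 \<Rightarrow> 'g obj3 \<Rightarrow> nat) \<Rightarrow> bool" where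
  "three_G_fusion_rules_inv G N \<longleftrightarrow>
     (\<forall>g\<in>carrier G. \<forall>h\<in>carrier G. \<forall>c\<in>simples3 G.
        N (Grp g) (Grp h) c = of_bool (c = Grp (g \<otimes>\<^bsub>G\<^esub> h))) \<and>
     (\<forall>g\<in>carrier G. \<forall>c\<in>simples3 G.
        N (Grp g) (Rho \<one>\<^bsub>G\<^esub>) c = of_bool (c = Rho g)) \<and>
     (\<forall>g\<in>carrier G. \<forall>c\<in>simples3 G.
        N (Rho \<one>\<^bsub>G\<^esub>) (Grp g) c = of_bool (c = Rho (inv\<^bsub>G\<^esub> g))) \<and>
     (\<forall>c\<in>simples3 G.
        N (Rho \<one>\<^bsub>G\<^esub>) (Rho \<one>\<^bsub>G\<^esub>) c =
          of_bool (c = Grp \<one>\<^bsub>G\<^esub> \<or> (\<exists>g\<in>carrier G. c = Rho g)))"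

end

theory Submission
  imports Defs
begin

theorem corollary2p5:
  fixes G :: "('g, 'b) monoid_scheme"
    and N :: "'g obj3 \<Rightarrow> 'g obj3 \<Rightarrow> 'g obj3 \<Rightarrow> nat"
    and dual :: "'g obj3 \<Rightarrow> 'g obj3"
  assumes "comm_group G"
    and "finite (carrier G)"
    and "carrier G \<noteq> {\<one>\<^bsub>G\<^esub>}"
    and "fusion_rules_with_duality (simples3 G) (Grp \<one>\<^bsub>G\<^esub>) N dual"
    and "three_G_fusion_rules_inv G N"
  shows "\<forall>g\<in>carrier G. dual (Rho g) = Rho g"
proof
  fix g assume g: "g \<in> carrier G"
  interpret group G using assms(1) comm_group.axioms(2) by blast
  let ?S = "simples3 G" and ?r = "Rho \<one>\<^bsub>G\<^esub>" and ?u = "Grp \<one>\<^bsub>G\<^esub>"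
  have memG: "\<And>h. h \<in> carrier G \<Longrightarrow> Grp h \<in> ?S" and memR: "\<And>h. h \<in> carrier G \<Longrightarrow> Rho h \<in> ?S"
    by (auto simp: simples3_def)
  have F: "\<forall>a\<in>?S. dual a \<in> ?S \<and> dual (dual a) = a"
    "\<forall>a\<in>?S. \<forall>b\<in>?S. N a b ?u = of_bool (b = dual a)"
    "\<forall>a\<in>?S. \<forall>b\<in>?S. \<forall>c\<in>?S. N a b c = N (dual b) (dual a) (dual c)"
    using assms(4) unfolding fusion_rules_with_duality_def by blast+
  have T: "\<forall>g\<in>carrier G. \<forall>h\<in>carrier G. \<forall>c\<in>?S. N (Grp g) (Grp h) c = of_bool (c = Grp (g \<otimes>\<^bsub>G\<^esub> h))"
    "\<forall>g\<in>carrier G. \<forall>c\<in>?S. N (Grp g) ?r c = of_bool (c = Rho g)"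
    "\<forall>g\<in>carrier G. \<forall>c\<in>?S. N ?r (Grp g) c = of_bool (c = Rho (inv\<^bsub>G\<^esub> g))"
    "\<forall>c\<in>?S. N ?r ?r c = of_bool (c = ?u \<or> (\<exists>g\<in>carrier G. c = Rho g))"
    using assms(5) unfolding three_G_fusion_rules_inv_def by blast+
  have dr: "dual ?r = ?r"
  proof -
    have "N ?r ?r ?u = 1" using T(4) memG[of "\<one>\<^bsub>G\<^esub>"] by simp
    moreover have "N ?r ?r ?u = of_bool (?r = dual ?r)" using F(2) memR[of "\<one>\<^bsub>G\<^esub>"] by simp
    ultimately show ?thesis by (cases "?r = dual ?r") auto
  qed
  have dg: "dual (Grp g) = Grp (inv\<^bsub>G\<^esub> g)"
  proof -
    have "N (Grp g) (Grp (inv\<^bsub>G\<^esub> g)) ?u = 1" using T(1) g memG[of "\<one>\<^bsub>G\<^esub>"] by simp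
    moreover have "N (Grp g) (Grp (inv\<^bsub>G\<^esub> g)) ?u = of_bool (Grp (inv\<^bsub>G\<^esub> g) = dual (Grp g))"
      using F(2) g memG by simp
    ultimately show ?thesis by (cases "Grp (inv\<^bsub>G\<^esub> g) = dual (Grp g)") auto
  qed
  have "N (Grp g) ?r (Rho g) = 1" using T(2) g memR by simp
  moreover have "N (Grp g) ?r (Rho g) = N (dual ?r) (dual (Grp g)) (dual (Rho g))"
    using F(3) g memG memR by simp
  moreover have "dual (Rho g) \<in> ?S" using F(1) memR g by blast
  ultimately have "N ?r (Grp (inv\<^bsub>G\<^esub> g)) (dual (Rho g)) = 1" using dr dg by simp
  moreover have "N ?r (Grp (inv\<^bsub>G\<^esub> g)) (dual (Rho g)) = of_bool (dual (Rho g) = Rho (inv\<^bsub>G\<^esub> (inv\<^bsub>G\<^esub> g)))"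
    using T(3) g \<open>dual (Rho g) \<in> ?S\<close> by simp
  ultimately show "dual (Rho g) = Rho g" using g by (cases "dual (Rho g) = Rho (inv\<^bsub>G\<^esub> (inv\<^bsub>G\<^esub> g))") auto
qed

end
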